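(* For every $n$ with $2\le n\le\infty$, the identity $xysxty \approx yxsxty$ is a finite identity basis for the sylvester monoid $\mathrm{sylv}_n$. Consequently, all sylvester monoids of rank at least $2$ (including rank $\infty$) are equationally equivalent.
   Context: Let $\mathcal{A}=\{1<2<3<\cdots\}$, $\mathcal{A}_n=\{1<\cdots<n\}$, $\mathcal{A}_\infty=\mathcal{A}$. A right strict binary search tree is a labelled rooted binary tree (labels in $\mathcal{A}$) in which each node's label is $\ge$ every label in its left subtree and $<$ every label in its right subtree. Inserting $a$ into such a tree $T$: if $T$ is empty, create a node labelled $a$; otherwise, with root label $x$, recursively insert $a$ into the right subtree if $a>x$ and into the left subtree otherwise. For $w=w_1\cdots w_k\in\mathcal{A}^*$, $\mathrm{P}(w)$ is obtained from the empty tree by inserting $w_k,\dots,w_1$ in this order. The relation $u\equiv v\iff\mathrm{P}(u)=\mathrm{P}(v)$ is a congruence, and $\mathrm{sylv}_n=\mathcal{A}_n^*/{\equiv}$. Identities: $\mathcal{X}$ is a countably infinite alphabet; an identity is $\mathbf{u}\approx\mathbf{v}$ with $\mathbf{u},\mathbf{v}\in\mathcal{X}^*$; a monoid $S$ satisfies it if $\varphi(\mathbf{u})=\varphi(\mathbf{v})$ for all maps $\varphi:\mathcal{X}\to S$ (extended to monoid homomorphisms). $\mathbf{u}\approx\mathbf{v}$ is derived from a set $\Sigma$ if there is a sequence $\mathbf{u}=\mathbf{u}_1,\dots,\mathbf{u}_m=\mathbf{v}$ with $\mathbf{u}_i=\mathbf{a}\varphi(\mathbf{p})\mathbf{b}$,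 $\mathbf{u}_{i+1}=\mathbf{a}\varphi(\mathbf{q})\mathbf{b}$ for some words $\mathbf{a},\mathbf{b}\in\mathcal{X}^*$, a monoid endomorphism $\varphi$ of $\mathcal{X}^*$ (letters may go to the empty word), and $\mathbf{p}\approx\mathbf{q}\in\Sigma$. A finite identity basis for $S$ is a finite set $\Sigma$ of identities satisfied by $S$ from which every identity satisfied by $S$ is derived. Two monoids are equationally equivalent if they satisfy the same identities. *)

theory Defs
  imports Main "HOL-Library.Tree" "HOL-Library.Extended_Nat"
begin

text \<open>Letters of the alphabet are positive naturals; A_n = {1..n}, A_infinity = {1,2,...}.
  The rank n is an extended natural (\<infinity> allowed).\<close>

definition in_alph :: "enat \<Rightarrow> nat \<Rightarrow> bool" where
  "in_alph n a \<longleftrightarrow> 1 \<le> a \<and> enat a \<le> n"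

fun bst_ins :: "nat \<Rightarrow> nat tree \<Rightarrow> nat tree" where
  "bst_ins a Leaf = Node Leaf a Leaf"
| "bst_ins a (Node l x r) =
     (if a > x then Node l x (bst_ins a r) else Node (bst_ins a l) x r)"

text \<open>P(w_1...w_k): insert w_k, ..., w_1 in this order into the empty tree.\<close>
definition sylvP :: "nat list \<Rightarrow> nat tree" where
  "sylvP w = foldr bst_ins w Leaf"

text \<open>Variables (the countably infinite alphabet X) are naturals; words over X are nat lists.
  An identity is a pair of words.\<close>

type_synonym ident = "nat list \<times> nat list"

definition subst :: "(nat \<Rightarrow> 'a list) \<Rightarrow> nat list \<Rightarrow> 'a list" where
  "subst \<phi> u = concat (map \<phi> u)"

text \<open>sylv_n satisfies u \<approx> v: every map X \<rightarrow> sylv_n factors through A_n^*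
  (the quotient map is surjective), so this means: for every assignment of words over A_n
  to the variables, the two resulting words have the same P-symbol.\<close>
definition sylv_sat :: "enat \<Rightarrow> nat list \<Rightarrow> nat list \<Rightarrow> bool" where
  "sylv_sat n u v \<longleftrightarrow>
     (\<forall>\<phi> :: nat \<Rightarrow> nat list. (\<forall>i. \<forall>a\<in>set (\<phi> i). in_alph n a) \<longrightarrow>
        sylvP (subst \<phi> u) = sylvP (subst \<phi> v))"

definition deriv_step :: "ident set \<Rightarrow> nat list \<Rightarrow> nat list \<Rightarrow> bool" where
  "deriv_step \<Sigma> w w' \<longleftrightarrow>
     (\<exists>a b \<phi> p q. ((p, q) \<in> \<Sigma> \<or> (q, p) \<in> \<Sigma>) \<and>
        w = a @ subst \<phi> p @ b \<and> w' = a @ subst \<phi> q @ b)"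

definition derivable :: "ident set \<Rightarrow> nat list \<Rightarrow> nat list \<Rightarrow> bool" where
  "derivable \<Sigma> u v \<longleftrightarrow> (deriv_step \<Sigma>)\<^sup>*\<^sup>* u v"

definition finite_identity_basis :: "(nat list \<Rightarrow> nat list \<Rightarrow> bool) \<Rightarrow> ident set \<Rightarrow> bool" where
  "finite_identity_basis Sat \<Sigma> \<longleftrightarrow>
     finite \<Sigma> \<and> (\<forall>(p, q)\<in>\<Sigma>. Sat p q) \<and> (\<forall>u v. Sat u v \<longrightarrow> derivable \<Sigma> u v)"

end

theory Submission imports Defs "HOL-Library.Multiset" begin

lemma sylvP_Nil[simp]: "sylvP [] = Leaf" by (simp add: sylvP_def)
lemma sylvP_Cons[simp]: "sylvP (c # w) = bst_ins c (sylvP w)" by (simp add: sylvP_def)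
lemma sylvP_append: "sylvP (u @ q) = foldr bst_ins u (sylvP q)" by (simp add: sylvP_def)

lemma size_bst_ins: "size (bst_ins c T) = Suc (size T)"
  by (induct T) auto
lemma size_sylvP: "size (sylvP w) = length w"
  by (induct w) (auto simp: size_bst_ins)

fun graft :: "nat tree \<Rightarrow> nat list \<Rightarrow> nat tree" where
  "graft Leaf u = sylvP u"
| "graft (Node l z r) u = Node (graft l (filter (\<lambda>c. c \<le> z) u)) z (graft r (filter (\<lambda>c. z < c) u))"

lemma graft_Nil: "graft T [] = T" by (induct T) auto
lemma bst_ins_graft: "bst_ins c (graft T u) = graft T (c # u)"
  by (induct T arbitrary: u) auto
lemma foldr_graft: "foldr bst_ins u T = graft T u"
  by (induct u) (auto simp: graft_Nil bst_ins_graft)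

fun rle :: "nat \<Rightarrow> nat tree \<Rightarrow> nat tree" where
  "rle x Leaf = Leaf"
| "rle x (Node l y r) = (if y \<le> x then Node (rle x l) y (rle x r) else rle x l)"
fun rgt :: "nat \<Rightarrow> nat tree \<Rightarrow> nat tree" where
  "rgt x Leaf = Leaf"
| "rgt x (Node l y r) = (if x < y then Node (rgt x l) y (rgt x r) else rgt x r)"

lemma rle_ins: "rle x (bst_ins c T) = (if c \<le> x then bst_ins c (rle x T) else rle x T)"
  by (induct T) auto
lemma rgt_ins: "rgt x (bst_ins c T) = (if x < c then bst_ins c (rgt x T) else rgt x T)"
  by (induct T) auto
lemma sylvP_filter_le: "sylvP (filter (\<lambda>c. c \<le> x) u) = rle x (sylvP u)"
  by (induct u) (auto simp: rle_ins)
lemma sylvP_filter_gt: "sylvP (filter (\<lambda>c. x < c) u) = rgt x (sylvP u)"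
  by (induct u) (auto simp: rgt_ins)

lemma graft_cong: "sylvP u = sylvP v \<Longrightarrow> graft T u = graft T v"
  by (induct T arbitrary: u v) (auto simp: sylvP_filter_le sylvP_filter_gt)

lemma sylvP_cong: assumes "sylvP u = sylvP v" shows "sylvP (p @ u @ q) = sylvP (p @ v @ q)"
proof -
  have "graft (sylvP q) u = graft (sylvP q) v" by (rule graft_cong[OF assms])
  then have "sylvP (u @ q) = sylvP (v @ q)" by (simp add: sylvP_append foldr_graft)
  then show ?thesis by (metis sylvP_append)
qed

fun bstR :: "nat tree \<Rightarrow> bool" where
  "bstR Leaf = True"
| "bstR (Node l z r) = (bstR l \<and> bstR r \<and> (\<forall>y\<in>set_tree l. y \<le> z) \<and> (\<forall>y\<in>set_tree r. z < y))"

lemma set_bst_ins: "set_tree (bst_ins c T) = insert c (set_tree T)"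
  by (induct T) auto
lemma bstR_ins: "bstR T \<Longrightarrow> bstR (bst_ins c T)"
  by (induct T) (auto simp: set_bst_ins)
lemma bstR_sylvP: "bstR (sylvP w)"
  by (induct w) (auto simp: bstR_ins)
lemma set_sylvP: "set_tree (sylvP w) = set w"
  by (induct w) (auto simp: set_bst_ins)

lemma all_eq_perm:
  assumes "mset u = mset v" "\<forall>c\<in>set u. \<forall>c'\<in>set u. c = c'"
  shows "u = v"
proof (cases u)
  case Nil then show ?thesis using assms by simp
next
  case (Cons a u')
  have su: "\<forall>y\<in>set u. y = a" using assms(2) Cons by auto
  have sv: "\<forall>y\<in>set v. y = a" using su assms(1) by (metis set_mset_mset)
  have "length u = length v" using assms(1) by (metis size_mset)
  then show ?thesis using replicate_length_same[OF su] replicate_length_same[OF sv] by metis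
qed

lemma graft_perm:
  "bstR T \<Longrightarrow> mset u = mset v \<Longrightarrow>
   (\<forall>c\<in>set u. \<forall>c'\<in>set u. c < c' \<longrightarrow> (\<exists>y\<in>set_tree T. c \<le> y \<and> y < c')) \<Longrightarrow> graft T u = graft T v"
proof (induct T arbitrary: u v)
  case Leaf
  have "\<forall>c\<in>set u. \<forall>c'\<in>set u. c = c'"
    using Leaf(3) by (metis empty_iff linorder_neqE_nat tree.set(1))
  then show ?case using all_eq_perm[OF Leaf(2)] by simp
next
  case (Node l z r)
  have L: "graft l (filter (\<lambda>c. c \<le> z) u) = graft l (filter (\<lambda>c. c \<le> z) v)"
  proof (rule Node(1))
    show "bstR l" using Node(3) by simp
    show "mset (filter (\<lambda>c. c \<le> z) u) = mset (filter (\<lambda>c. c \<le> z) v)" using Node(4) by simp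
    show "\<forall>c\<in>set (filter (\<lambda>c. c \<le> z) u). \<forall>c'\<in>set (filter (\<lambda>c. c \<le> z) u). c < c' \<longrightarrow> (\<exists>y\<in>set_tree l. c \<le> y \<and> y < c')"
    proof (intro ballI impI)
      fix c c' assume a: "c \<in> set (filter (\<lambda>c. c \<le> z) u)" "c' \<in> set (filter (\<lambda>c. c \<le> z) u)" "c < c'"
      then have "c \<in> set u" "c' \<in> set u" by auto
      then have "\<exists>y\<in>set_tree (Node l z r). c \<le> y \<and> y < c'" using Node(5) a(3) by blast
      then obtain y where y: "y \<in> set_tree (Node l z r)" "c \<le> y" "y < c'" by blast
      show "\<exists>y\<in>set_tree l. c \<le> y \<and> y < c'"
        using y a Node(3) by fastforce
    qed
  qed
  have R: "graft r (filter (\<lambda>c. z < c) u) = graft r (filter (\<lambda>c. z < c) v)"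
  proof (rule Node(2))
    show "bstR r" using Node(3) by simp
    show "mset (filter (\<lambda>c. z < c) u) = mset (filter (\<lambda>c. z < c) v)" using Node(4) by simp
    show "\<forall>c\<in>set (filter (\<lambda>c. z < c) u). \<forall>c'\<in>set (filter (\<lambda>c. z < c) u). c < c' \<longrightarrow> (\<exists>y\<in>set_tree r. c \<le> y \<and> y < c')"
    proof (intro ballI impI)
      fix c c' assume a: "c \<in> set (filter (\<lambda>c. z < c) u)" "c' \<in> set (filter (\<lambda>c. z < c) u)" "c < c'"
      then have "c \<in> set u" "c' \<in> set u" by auto
      then have "\<exists>y\<in>set_tree (Node l z r). c \<le> y \<and> y < c'" using Node(5) a(3) by blast
      then obtain y where y: "y \<in> set_tree (Node l z r)" "c \<le> y" "y < c'" by blast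
      show "\<exists>y\<in>set_tree r. c \<le> y \<and> y < c'"
        using y a Node(3) by fastforce
    qed
  qed
  show ?case using L R by simp
qed

lemma sylv_identity:
  "sylvP (X @ Y @ S @ X @ T @ Y) = sylvP (Y @ X @ S @ X @ T @ Y)"
proof -
  let ?W = "S @ X @ T @ Y"
  have "graft (sylvP ?W) (X @ Y) = graft (sylvP ?W) (Y @ X)"
  proof (rule graft_perm)
    show "bstR (sylvP ?W)" by (rule bstR_sylvP)
    show "mset (X @ Y) = mset (Y @ X)" by simp
    show "\<forall>c\<in>set (X @ Y). \<forall>c'\<in>set (X @ Y). c < c' \<longrightarrow> (\<exists>y\<in>set_tree (sylvP ?W). c \<le> y \<and> y < c')"
      by (auto simp: set_sylvP)
  qed
  then show ?thesis
    using sylvP_append[of "X @ Y" ?W] sylvP_append[of "Y @ X" ?W]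
    by (metis append_assoc foldr_graft)
qed


fun aft :: "nat \<Rightarrow> nat list \<Rightarrow> nat list" where
  "aft x [] = []"
| "aft x (c # w) = (if x \<in> set w then aft x w else if c = x then w else c # w)"

lemma aft_notin: "x \<notin> set w \<Longrightarrow> aft x w = w"
  by (induct w) auto
lemma aft_append: "x \<in> set w \<Longrightarrow> aft x (p @ w) = aft x w"
  by (induct p) auto
lemma aft_append2: "x \<notin> set w \<Longrightarrow> aft x (p @ w) = aft x p @ w"
  by (induct p) (auto simp: aft_notin)
lemma count_aft_le: "count_list (aft x w) y \<le> count_list w y"
  by (induct w) auto
lemma count_aft_self: "count_list (aft x w) x = 0"
  by (induct w) (auto simp: aft_notin)

fun lc2 :: "nat tree \<Rightarrow> nat" where
  "lc2 Leaf = 0"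
| "lc2 (Node l z r) = (if z = 2 then Suc (lc2 l) else 0)"
fun hasn2 :: "nat tree \<Rightarrow> bool" where
  "hasn2 Leaf = False"
| "hasn2 (Node l z r) = (if z = 2 then hasn2 l else True)"

lemma ins_hasn2: "c \<le> 2 \<Longrightarrow> hasn2 T \<Longrightarrow> lc2 (bst_ins c T) = lc2 T \<and> hasn2 (bst_ins c T)"
  by (induct T) auto
lemma ins_nohasn2: "\<not> hasn2 T \<Longrightarrow> lc2 (bst_ins 2 T) = Suc (lc2 T) \<and> \<not> hasn2 (bst_ins 2 T)"
  by (induct T) (auto split: if_splits)
lemma ins1_nohasn2: "\<not> hasn2 T \<Longrightarrow> lc2 (bst_ins 1 T) = lc2 T \<and> hasn2 (bst_ins 1 T)"
  by (induct T) auto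

lemma lc2_sylvP: "set w \<subseteq> {1,2} \<Longrightarrow> lc2 (sylvP w) = count_list (aft 1 w) 2 \<and> hasn2 (sylvP w) = (1 \<in> set w)"
proof (induct w)
  case Nil then show ?case by simp
next
  case (Cons c w)
  then have IH: "lc2 (sylvP w) = count_list (aft 1 w) 2" "hasn2 (sylvP w) = (1 \<in> set w)"
    and c: "c = 1 \<or> c = 2" by auto
  show ?case
  proof (cases "1 \<in> set w")
    case True
    then show ?thesis using ins_hasn2[of c "sylvP w"] IH c by auto
  next
    case False
    then show ?thesis using ins_nohasn2[of "sylvP w"] ins1_nohasn2[of "sylvP w"] IH c
      by (auto simp: aft_notin)
  qed
qed

lemma subst_Nil[simp]: "subst \<phi> [] = []" by (simp add: subst_def)
lemma subst_Cons[simp]: "subst \<phi> (c # u) = \<phi> c @ subst \<phi> u" by (simp add: subst_def)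
lemma subst_append[simp]: "subst \<phi> (u @ v) = subst \<phi> u @ subst \<phi> v" by (simp add: subst_def)
lemma subst_subst: "subst \<psi> (subst \<phi> p) = subst (\<lambda>i. subst \<psi> (\<phi> i)) p"
  by (induct p) auto

lemma len_subst1: "length (subst (\<lambda>z. if z = y then [1::nat] else []) u) = count_list u y"
  by (induct u) auto

definition phi2 :: "nat \<Rightarrow> nat \<Rightarrow> nat \<Rightarrow> nat list" where
  "phi2 x y = (\<lambda>z. if z = x then [1] else if z = y then [2] else [])"

lemma phi2_set: "set (subst (phi2 x y) u) \<subseteq> {1,2}"
  by (induct u) (auto simp: phi2_def)
lemma phi2_1: "(1 \<in> set (subst (phi2 x y) u)) = (x \<in> set u)"
  by (induct u) (auto simp: phi2_def split: if_splits)
lemma phi2_cnt: "x \<noteq> y \<Longrightarrow> count_list (subst (phi2 x y) u) 2 = count_list u y"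
  by (induct u) (auto simp: phi2_def)
lemma phi2_aft: "x \<noteq> y \<Longrightarrow> count_list (aft 1 (subst (phi2 x y) u)) 2 = count_list (aft x u) y"
proof (induct u)
  case Nil then show ?case by simp
next
  case (Cons c u)
  show ?case
  proof (cases "x \<in> set u")
    case True
    then have "1 \<in> set (subst (phi2 x y) u)" using phi2_1 by blast
    then show ?thesis using Cons True by (simp add: aft_append)
  next
    case False
    then have n1: "1 \<notin> set (subst (phi2 x y) u)" using phi2_1 by blast
    show ?thesis
    proof (cases "c = x")
      case True
      have "phi2 x y c = [1]" using True by (simp add: phi2_def)
      then show ?thesis using n1 False Cons(2) True by (simp add: aft_append2 phi2_cnt aft_notin)
    next
      case cx: False
      then have "aft 1 (phi2 x y c) = phi2 x y c" by (simp add: phi2_def aft_notin)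
      moreover have "count_list (phi2 x y c) 2 = (if c = y then 1 else 0)" using cx by (simp add: phi2_def)
      ultimately show ?thesis using n1 False Cons(2) cx by (simp add: aft_append2 phi2_cnt aft_notin)
    qed
  qed
qed

definition INV :: "nat list \<Rightarrow> nat list \<Rightarrow> bool" where
  "INV u v \<longleftrightarrow> (\<forall>y. count_list u y = count_list v y) \<and>
     (\<forall>x y. x \<noteq> y \<longrightarrow> count_list (aft x u) y = count_list (aft x v) y)"

lemma sat_INV:
  assumes n: "2 \<le> n" and s: "sylv_sat n u v"
  shows "INV u v"
proof -
  have e2: "enat 2 \<le> n" using n by (simp add: numeral_eq_enat)
  then have e1: "enat 1 \<le> n" using order_trans[of "enat 1" "enat 2" n] by simp
  have a1: "in_alph n 1" "in_alph n 2" using e1 e2 by (auto simp: in_alph_def)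
  have C: "count_list u y = count_list v y" for y
  proof -
    let ?\<phi> = "\<lambda>z. if z = y then [1::nat] else []"
    have "sylvP (subst ?\<phi> u) = sylvP (subst ?\<phi> v)"
      using s a1 unfolding sylv_sat_def by auto
    then have "size (sylvP (subst ?\<phi> u)) = size (sylvP (subst ?\<phi> v))" by simp
    then show ?thesis by (simp add: size_sylvP len_subst1)
  qed
  have A: "count_list (aft x u) y = count_list (aft x v) y" if xy: "x \<noteq> y" for x y
  proof -
    have "\<forall>i. \<forall>a\<in>set (phi2 x y i). in_alph n a" using a1 by (auto simp: phi2_def)
    then have "sylvP (subst (phi2 x y) u) = sylvP (subst (phi2 x y) v)"
      using s unfolding sylv_sat_def by blast
    then have "lc2 (sylvP (subst (phi2 x y) u)) = lc2 (sylvP (subst (phi2 x y) v))" by simp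
    then show ?thesis using lc2_sylvP[OF phi2_set] phi2_aft[OF xy] by simp
  qed
  show ?thesis unfolding INV_def using C A by blast
qed


lemma derivable_refl: "derivable \<Sigma> u u" by (simp add: derivable_def)
lemma derivable_trans: "derivable \<Sigma> u v \<Longrightarrow> derivable \<Sigma> v w \<Longrightarrow> derivable \<Sigma> u w"
  unfolding derivable_def by (rule rtranclp_trans)
lemma deriv_step_sym: "deriv_step \<Sigma> u v \<Longrightarrow> deriv_step \<Sigma> v u"
  unfolding deriv_step_def by blast
lemma derivable_sym: "derivable \<Sigma> u v \<Longrightarrow> derivable \<Sigma> v u"
  unfolding derivable_def
proof (induct rule: rtranclp_induct)
  case base then show ?case by simp
next
  case (step y z)
  then show ?case using deriv_step_sym[OF step(2)] by (meson converse_rtranclp_into_rtranclp)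
qed
lemma deriv_step_Cons: "deriv_step \<Sigma> u v \<Longrightarrow> deriv_step \<Sigma> (c # u) (c # v)"
  unfolding deriv_step_def by (metis Cons_eq_appendI)
lemma derivable_Cons: "derivable \<Sigma> u v \<Longrightarrow> derivable \<Sigma> (c # u) (c # v)"
  unfolding derivable_def
proof (induct rule: rtranclp_induct)
  case base then show ?case by simp
next
  case (step y z)
  then show ?case using deriv_step_Cons[OF step(2)] by (meson rtranclp.rtrancl_into_rtrancl)
qed

lemma derivable_sound:
  assumes "derivable \<Sigma> u v" "\<forall>(p, q)\<in>\<Sigma>. \<forall>\<phi>. sylvP (subst \<phi> p) = sylvP (subst \<phi> q)"
  shows "sylvP (subst \<psi> u) = sylvP (subst \<psi> v)"
  using assms(1) unfolding derivable_def
proof (induct rule: rtranclp_induct)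
  case base then show ?case by simp
next
  case (step y z)
  from step(2) obtain a b \<phi> p q where pq: "(p, q) \<in> \<Sigma> \<or> (q, p) \<in> \<Sigma>"
    and y: "y = a @ subst \<phi> p @ b" and z: "z = a @ subst \<phi> q @ b"
    unfolding deriv_step_def by blast
  have "sylvP (subst (\<lambda>i. subst \<psi> (\<phi> i)) p) = sylvP (subst (\<lambda>i. subst \<psi> (\<phi> i)) q)"
    using pq assms(2) by fastforce
  then have e: "sylvP (subst \<psi> (subst \<phi> p)) = sylvP (subst \<psi> (subst \<phi> q))"
    by (simp only: subst_subst)
  have "sylvP (subst \<psi> y) = sylvP (subst \<psi> z)"
    unfolding y z subst_append by (rule sylvP_cong[OF e])
  then show ?case using step(3) by simp
qed

context
  fixes x y s t :: nat
  assumes dist: "distinct [x, y, s, t]"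
begin

abbreviation "Sg \<equiv> {([x, y, s, x, t, y], [y, x, s, x, t, y])}"

lemma swap_basic:
  "deriv_step Sg (p @ [z, a] @ s1 @ [z] @ t1 @ [a] @ r) (p @ [a, z] @ s1 @ [z] @ t1 @ [a] @ r)"
proof -
  define \<phi> where "\<phi> = (\<lambda>i. if i = x then [z] else if i = y then [a] else if i = s then s1 else if i = t then t1 else [])"
  have "subst \<phi> [x, y, s, x, t, y] = [z, a] @ s1 @ [z] @ t1 @ [a]"
    "subst \<phi> [y, x, s, x, t, y] = [a, z] @ s1 @ [z] @ t1 @ [a]"
    using dist by (auto simp: \<phi>_def)
  then show ?thesis unfolding deriv_step_def
    apply -
    apply (rule exI[of _ p], rule exI[of _ r], rule exI[of _ \<phi>])
    apply (rule exI[of _ "[x, y, s, x, t, y]"], rule exI[of _ "[y, x, s, x, t, y]"])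
    by simp
qed

lemma swap:
  assumes "z \<noteq> a" "z \<in> set q" "a \<in> set q"
  shows "derivable Sg (p @ z # a # q) (p @ a # z # q)"
proof -
  obtain ys zs where q: "q = ys @ z # zs" "z \<notin> set ys" using split_list_first[OF assms(2)] by blast
  show ?thesis
  proof (cases "a \<in> set zs")
    case True
    then obtain t1 r where "zs = t1 @ a # r" by (meson split_list)
    then have "deriv_step Sg (p @ z # a # q) (p @ a # z # q)"
      using swap_basic[of p z a ys t1 r] q by simp
    then show ?thesis unfolding derivable_def by blast
  next
    case False
    then have "a \<in> set ys" using q assms by auto
    then obtain s1 t1 where "ys = s1 @ a # t1" by (meson split_list)
    then have "deriv_step Sg (p @ a # z # q) (p @ z # a # q)"
      using swap_basic[of p a z s1 t1 zs] q by simp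
    then show ?thesis unfolding derivable_def using deriv_step_sym by blast
  qed
qed

lemma move:
  "a \<notin> set w \<Longrightarrow> (\<forall>c\<in>set w. c \<in> set v2) \<Longrightarrow> a \<in> set v2 \<Longrightarrow>
   derivable Sg (p @ w @ a # v2) (p @ a # w @ v2)"
proof (induct w arbitrary: v2 rule: rev_induct)
  case Nil then show ?case by (simp add: derivable_refl)
next
  case (snoc c w0)
  have 1: "derivable Sg ((p @ w0) @ c # a # v2) ((p @ w0) @ a # c # v2)"
    by (rule swap) (use snoc in auto)
  have 2: "derivable Sg (p @ w0 @ a # (c # v2)) (p @ a # w0 @ (c # v2))"
    by (rule snoc(1)) (use snoc in auto)
  show ?case using derivable_trans[OF 1] 2 by simp
qed

lemma main: "INV u v \<Longrightarrow> derivable Sg u v"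
proof (induction u arbitrary: v)
  case Nil
  then have "\<forall>c. count_list v c = 0" by (simp add: INV_def)
  then have "v = []" by (metis count_list_0_iff list.set_intros(1) neq_Nil_conv)
  then show ?case by (simp add: derivable_refl)
next
  case (Cons a u)
  have cnt: "\<And>c. count_list (a # u) c = count_list v c" using Cons(2) by (simp add: INV_def)
  have aftc: "\<And>x' y'. x' \<noteq> y' \<Longrightarrow> count_list (aft x' (a # u)) y' = count_list (aft x' v) y'"
    using Cons(2) by (simp add: INV_def)
  have setv: "\<And>c. c \<in> set v \<longleftrightarrow> c \<in> set (a # u)"
    using cnt by (metis count_list_0_iff)
  show ?case
  proof (cases "a \<in> set u")
    case False
    obtain b v' where v: "v = b # v'" using setv by (metis list.set_intros(1) neq_Nil_conv empty_iff list.set(1))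
    have ba: "b = a"
    proof (rule ccontr)
      assume nb: "b \<noteq> a"
      have "a \<in> set v'" using setv[of a] v nb by auto
      have 1: "count_list (aft a (a # u)) b = count_list (a # u) b" using False nb by (simp add: aft_notin)
      have "count_list (aft a v) b = count_list (aft a v') b" using v \<open>a \<in> set v'\<close> by simp
      also have "\<dots> \<le> count_list v' b" by (rule count_aft_le)
      also have "\<dots> < count_list v b" using v by simp
      finally show False using 1 aftc[of a b] nb cnt[of b] by simp
    qed
    have "INV u v'"
      unfolding INV_def
    proof (intro conjI allI impI)
      fix c show "count_list u c = count_list v' c" using cnt[of c] v ba by (simp split: if_splits)
    next
      fix x' y' :: nat assume xy: "x' \<noteq> y'"
      have cu: "count_list u c = count_list v' c" for c using cnt[of c] v ba by (simp split: if_splits)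
      show "count_list (aft x' u) y' = count_list (aft x' v') y'"
      proof (cases "x' = a")
        case True
        have "a \<notin> set v'" using cu[of a] False by (metis count_list_0_iff)
        then show ?thesis using True False cu by (simp add: aft_notin)
      next
        case xa: False
        have sv: "x' \<in> set u \<longleftrightarrow> x' \<in> set v'" using cu by (metis count_list_0_iff)
        show ?thesis
        proof (cases "x' \<in> set u")
          case True
          then show ?thesis using aftc[OF xy] v ba sv by simp
        next
          case nf: False
          then show ?thesis using sv cu by (simp add: aft_notin)
        qed
      qed
    qed
    then have "derivable Sg u v'" by (rule Cons.IH)
    then show ?thesis using v ba derivable_Cons by simp
  next
    case True
    have "a \<in> set v" using setv by simp
    then obtain w v2 where v: "v = w @ a # v2" "a \<notin> set w" using split_list_first by metis
    have cw: "count_list w a = 0" using v(2) by simp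
    have "count_list u a \<ge> 1" using True by (metis count_list_0_iff less_one not_le)
    then have "count_list v2 a \<ge> 1" using cnt[of a] v cw by simp
    then have av2: "a \<in> set v2" by (metis count_notin not_one_le_zero)
    have wsub: "\<forall>z\<in>set w. z \<in> set v2"
    proof
      fix z assume zw: "z \<in> set w"
      show "z \<in> set v2"
      proof (rule ccontr)
        assume zn: "z \<notin> set v2"
        have za: "z \<noteq> a" using zw v(2) by auto
        have "count_list (aft z v) a = count_list (aft z w @ a # v2) a"
          using v zn za by (simp add: aft_append2)
        also have "\<dots> = count_list v a"
          using v count_aft_le[of z w a] cw by simp
        finally have e1: "count_list (aft z v) a = count_list v a" .
        have "z \<in> set u" using setv[of z] zw v za by auto
        then have "count_list (aft z (a # u)) a = count_list (aft z u) a" by simp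
        also have "\<dots> \<le> count_list u a" by (rule count_aft_le)
        also have "\<dots> < count_list (a # u) a" by simp
        finally show False using e1 aftc[OF za] cnt[of a] by simp
      qed
    qed
    have d1: "derivable Sg v (a # w @ v2)"
      using move[of a w v2 "[]"] v wsub av2 by simp
    have sv2: "\<And>x'. x' \<noteq> a \<Longrightarrow> x' \<in> set u \<longleftrightarrow> x' \<in> set v2"
      using setv v wsub by auto
    have "INV u (w @ v2)"
      unfolding INV_def
    proof (intro conjI allI impI)
      fix c show "count_list u c = count_list (w @ v2) c" using cnt[of c] v by (simp split: if_splits)
    next
      fix x' y' :: nat assume xy: "x' \<noteq> y'"
      show "count_list (aft x' u) y' = count_list (aft x' (w @ v2)) y'"
      proof (cases "x' = a")
        case xa: True
        have "aft a v = aft a v2"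
          using v av2 aft_append[of a "a # v2" w] by simp
        moreover have "aft a (w @ v2) = aft a v2" using av2 by (simp add: aft_append)
        ultimately show ?thesis using aftc[OF xy] xa True by simp
      next
        case xa: False
        show ?thesis
        proof (cases "x' \<in> set u")
          case xu: True
          then have xv: "x' \<in> set v2" using sv2 xa by simp
          have "aft x' v = aft x' v2" using v xv aft_append[of x' "a # v2" w] by simp
          moreover have "aft x' (w @ v2) = aft x' v2" using xv by (simp add: aft_append)
          ultimately show ?thesis using aftc[OF xy] xu by simp
        next
          case xu: False
          then have xv: "x' \<notin> set v2" using sv2 xa by simp
          have "aft x' v = aft x' w @ a # v2" using v xv xa by (simp add: aft_append2)
          moreover have "aft x' (w @ v2) = aft x' w @ v2" using xv by (simp add: aft_append2)
          moreover have "aft x' (a # u) = a # u" using xu xa by (simp add: aft_notin)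
          moreover have "aft x' u = u" using xu by (simp add: aft_notin)
          ultimately show ?thesis using aftc[OF xy] cnt[of y'] v by (simp split: if_splits)
        qed
      qed
    qed
    then have "derivable Sg u (w @ v2)" by (rule Cons.IH)
    then have "derivable Sg (a # u) (a # w @ v2)" by (rule derivable_Cons)
    then show ?thesis using derivable_sym[OF d1] derivable_trans by blast
  qed
qed

end

theorem theorem4p6:
  fixes x y s t :: nat
  assumes "distinct [x, y, s, t]"
  shows "(\<forall>n::enat. 2 \<le> n \<longrightarrow>
            finite_identity_basis (sylv_sat n) {([x, y, s, x, t, y], [y, x, s, x, t, y])})
       \<and> (\<forall>m n :: enat. 2 \<le> m \<longrightarrow> 2 \<le> n \<longrightarrow> (\<forall>u v. sylv_sat m u v \<longleftrightarrow> sylv_sat n u v))"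
proof -
  let ?S = "{([x, y, s, x, t, y], [y, x, s, x, t, y])}"
  have snd0: "sylvP (subst \<phi> [x, y, s, x, t, y]) = sylvP (subst \<phi> [y, x, s, x, t, y])" for \<phi>
    by (simp add: subst_def) (rule sylv_identity)
  have snd: "\<forall>(p, q)\<in>?S. \<forall>\<phi>. sylvP (subst \<phi> p) = sylvP (subst \<phi> q)"
    using snd0 by simp
  have der: "derivable ?S u v" if "2 \<le> n" "sylv_sat n u v" for n u v
    using main[OF assms sat_INV[OF that]] .
  have satall: "sylv_sat n u v" if "derivable ?S u v" for n u v
    unfolding sylv_sat_def using derivable_sound[OF that snd] by blast
  show ?thesis
  proof (intro conjI allI impI)
    fix n :: enat assume n: "2 \<le> n"
    show "finite_identity_basis (sylv_sat n) ?S"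
      unfolding finite_identity_basis_def
    proof (intro conjI)
      show "finite ?S" by simp
      show "\<forall>(p, q)\<in>?S. sylv_sat n p q" using snd unfolding sylv_sat_def by blast
      show "\<forall>u v. sylv_sat n u v \<longrightarrow> derivable ?S u v" using der n by blast
    qed
  next
    fix m n :: enat and u v assume "2 \<le> m" "2 \<le> n"
    then show "sylv_sat m u v \<longleftrightarrow> sylv_sat n u v" using der satall by blast
  qed
qed


end
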